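(* There is an absolute constant $C>0$ such that for every $r\ge1$ and all $j,l\in\{0,\ldots,r-1\}$, $$\|U_{jl}\|_2\le C\,2^{-|j-l|/2},$$ where $\|\cdot\|_2$ denotes the operator norm induced by the Euclidean norm.
   Context: Let $n=2^r$, $\mathcal{F}x(\omega)=\frac{1}{\sqrt n}\sum_{t=0}^{n-1}x(t)e^{2\pi i\omega t/n}$ for $x\in\mathbb{C}^n$. Haar vectors: $\psi(t)=2^{-r/2}$ ($0\le t<2^r$); for $l=0,\ldots,r-1$, $p=0,\ldots,2^l-1$: $\phi_{l,p}(t)=2^{(l-r)/2}$ if $p2^{r-l}\le t<(p+\tfrac12)2^{r-l}$, $-2^{(l-r)/2}$ if $(p+\tfrac12)2^{r-l}\le t<(p+1)2^{r-l}$, $0$ otherwise. Frequency bands: $W_0=\{0,1\}$, $W_j=\{-2^j+1,\ldots,-2^{j-1}\}\cup\{2^{j-1}+1,\ldots,2^j\}$ for $j=1,\ldots,r-1$. For $j,l\in\{0,\ldots,r-1\}$, $U_{jl}$ is the matrix with rows indexed by $\omega\in W_j$ and: for $l\ge1$, columns indexed by $p=0,\ldots,2^l-1$ with entries $(U_{jl})_{\omega,p}=\mathcal{F}\phi_{l,p}(\omega)$; for $l=0$, two columns with entries $(U_{j0})_{\omega,0}=\mathcal{F}\psi(\omega)$, $(U_{j0})_{\omega,1}=\mathcal{F}\phi_{0,0}(\omega)$. *)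

theory Defs
  imports "HOL-Analysis.Analysis"
begin

text \<open>Vectors in C^n with n = 2^r are functions nat => complex, only indices t < 2^r matter.\<close>

definition fourier :: "nat \<Rightarrow> (nat \<Rightarrow> complex) \<Rightarrow> int \<Rightarrow> complex" where
  "fourier r x \<omega> = (1 / sqrt (2 ^ r)) *
     (\<Sum>t<2^r. x t * exp (2 * pi * \<i> * of_int \<omega> * of_nat t / 2 ^ r))"

definition haar_psi :: "nat \<Rightarrow> nat \<Rightarrow> complex" where
  "haar_psi r t = (if t < 2^r then complex_of_real (2 powr (- real r / 2)) else 0)"

definition haar_phi :: "nat \<Rightarrow> nat \<Rightarrow> nat \<Rightarrow> nat \<Rightarrow> complex" where
  "haar_phi r l p t =
     (if real p * 2 ^ (r - l) \<le> real t \<and> real t < (real p + 1/2) * 2 ^ (r - l)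
      then complex_of_real (2 powr ((real l - real r) / 2))
      else if (real p + 1/2) * 2 ^ (r - l) \<le> real t \<and> real t < (real p + 1) * 2 ^ (r - l)
      then complex_of_real (- (2 powr ((real l - real r) / 2)))
      else 0)"

definition band :: "nat \<Rightarrow> int set" where
  "band j = (if j = 0 then {0, 1}
             else {- (2^j) + 1 .. - (2^(j-1))} \<union> {2^(j-1) + 1 .. 2^j})"

definition cols :: "nat \<Rightarrow> nat set" where
  "cols l = (if l = 0 then {0, 1} else {0..<2^l})"

text \<open>Entries of U_{jl}: rows omega in band j, columns p in cols l.\<close>
definition Ublock :: "nat \<Rightarrow> nat \<Rightarrow> nat \<Rightarrow> int \<Rightarrow> nat \<Rightarrow> complex" where
  "Ublock r j l \<omega> p =
     (if l = 0 then (if p = 0 then fourier r (haar_psi r) \<omega> else fourier r (haar_phi r 0 0) \<omega>)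
      else fourier r (haar_phi r l p) \<omega>)"

definition op_norm2 :: "('a \<Rightarrow> 'b \<Rightarrow> complex) \<Rightarrow> 'a set \<Rightarrow> 'b set \<Rightarrow> real" where
  "op_norm2 M R P = Sup {sqrt (\<Sum>\<omega>\<in>R. (cmod (\<Sum>p\<in>P. M \<omega> p * x p))\<^sup>2) | x.
                          (\<Sum>p\<in>P. (cmod (x p))\<^sup>2) \<le> 1}"

end

theory Submission imports Defs begin

definition zz :: "nat \<Rightarrow> int \<Rightarrow> complex" where
  "zz r \<omega> = exp (\<i> * of_real (2 * pi * of_int \<omega> / 2 ^ r))"

lemma fourier_alt:
  "fourier r x \<omega> = of_real (1 / sqrt (2 ^ r)) * (\<Sum>t<2^r. x t * zz r \<omega> ^ t)"
proof -
  have "exp (complex_of_real (2 * pi) * \<i> * complex_of_int \<omega> * complex_of_nat t / 2 ^ r)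
        = zz r \<omega> ^ t" for t
  proof -
    have "complex_of_real (2 * pi) * \<i> * complex_of_int \<omega> * complex_of_nat t / 2 ^ r
          = of_nat t * (\<i> * of_real (2 * pi * of_int \<omega> / 2 ^ r))"
      by (simp add: field_simps)
    then have "exp (complex_of_real (2 * pi) * \<i> * complex_of_int \<omega> * complex_of_nat t / 2 ^ r)
        = exp (of_nat t * (\<i> * of_real (2 * pi * of_int \<omega> / 2 ^ r)))" by (rule arg_cong[where f=exp])
    also have "\<dots> = zz r \<omega> ^ t" by (simp only: zz_def exp_of_nat_mult)
    finally show ?thesis .
  qed
  then show ?thesis unfolding fourier_def by simp
qed

lemma zz_pow: "zz r \<omega> ^ k = exp (\<i> * of_real (real k * (2 * pi * of_int \<omega> / 2 ^ r)))"
proof -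
  have "exp (\<i> * of_real (real k * (2 * pi * of_int \<omega> / 2 ^ r)))
      = exp (of_nat k * (\<i> * of_real (2 * pi * of_int \<omega> / 2 ^ r)))"
    by (simp add: algebra_simps)
  also have "\<dots> = zz r \<omega> ^ k" by (simp only: zz_def exp_of_nat_mult)
  finally show ?thesis by simp
qed

lemma norm_zz [simp]: "norm (zz r \<omega>) = 1"
  unfolding zz_def by simp

lemma norm_1_exp: "(cmod (1 - exp (\<i> * of_real x)))\<^sup>2 = 4 * (sin (x/2))\<^sup>2"
proof -
  have "(cmod (1 - exp (\<i> * of_real x)))\<^sup>2 = (1 - cos x)\<^sup>2 + (sin x)\<^sup>2"
    by (simp add: cmod_power2 Re_exp Im_exp)
  also have "\<dots> = 2 - 2 * cos x" using sin_cos_squared_add[of x]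
    by (simp add: power2_eq_square algebra_simps)
  also have "cos x = 1 - 2 * (sin (x/2))\<^sup>2" using cos_double_sin[of "x/2"] by simp
  finally show ?thesis by simp
qed

lemma norm_1_exp_le: "(cmod (1 - exp (\<i> * of_real x)))\<^sup>2 \<le> x\<^sup>2"
proof -
  have "\<bar>sin (x/2)\<bar> \<le> \<bar>x/2\<bar>" by (rule abs_sin_x_le_abs_x)
  then have "(sin (x/2))\<^sup>2 \<le> (x/2)\<^sup>2"
    by (metis abs_ge_zero power2_abs power_mono)
  then show ?thesis unfolding norm_1_exp by (simp add: power_divide)
qed

lemma norm_1_exp_le4: "(cmod (1 - exp (\<i> * of_real x)))\<^sup>2 \<le> 4"
proof -
  have "(sin (x/2))\<^sup>2 \<le> 1" by (simp add: abs_square_le_1)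
  then show ?thesis unfolding norm_1_exp by simp
qed

lemma sin_lower: assumes "\<bar>y\<bar> \<le> pi/2" shows "\<bar>y\<bar>/3 \<le> \<bar>sin y\<bar>"
proof -
  have s: "(\<Sum>m<3. sin_coeff m * y ^ m) = y"
    by (simp add: sin_coeff_def eval_nat_numeral)
  have m: "\<bar>sin y - y\<bar> \<le> inverse (fact 3) * \<bar>y\<bar>^3"
    using Maclaurin_sin_bound[of y 3] unfolding s .
  have f: "inverse (fact 3 :: real) = 1/6" by (simp add: eval_nat_numeral)
  have a0: "0 \<le> \<bar>y\<bar>" by simp
  have "\<bar>y\<bar> \<le> 2" using assms pi_less_4 by linarith
  then have "\<bar>y\<bar> * \<bar>y\<bar> \<le> 2 * 2" using a0 by (intro mult_mono) auto
  then have "\<bar>y\<bar> * (\<bar>y\<bar> * \<bar>y\<bar>) \<le> \<bar>y\<bar> * 4" using a0 by (intro mult_left_mono) auto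
  then have "\<bar>y\<bar>^3 \<le> \<bar>y\<bar> * 4" by (simp add: power3_eq_cube)
  moreover have "\<bar>sin y - y\<bar> \<le> \<bar>y\<bar>^3 / 6" using m f by simp
  moreover have "\<bar>y\<bar> - \<bar>sin y\<bar> \<le> \<bar>sin y - y\<bar>"
    using abs_triangle_ineq2[of y "sin y"] by (simp add: abs_minus_commute)
  ultimately show ?thesis by linarith
qed

lemma norm_1_exp_ge: assumes "\<bar>x\<bar> \<le> pi" shows "x\<^sup>2 / 9 \<le> (cmod (1 - exp (\<i> * of_real x)))\<^sup>2"
proof -
  have "\<bar>x/2\<bar>/3 \<le> \<bar>sin (x/2)\<bar>" using assms by (intro sin_lower) simp
  then have "(\<bar>x/2\<bar>/3)\<^sup>2 \<le> (\<bar>sin (x/2)\<bar>)\<^sup>2" by (intro power_mono) auto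
  then show ?thesis unfolding norm_1_exp by (simp add: power_divide)
qed

lemma geo_shift: "(\<Sum>t\<in>{a..<a+H}. (w::complex)^t) = w^a * (\<Sum>s<H. w^s)"
proof -
  have "(\<Sum>t\<in>{a..<a+H}. w^t) = (\<Sum>t\<in>{0+a..<H+a}. w^t)" by (simp add: add.commute)
  also have "\<dots> = (\<Sum>s\<in>{0..<H}. w^(s+a))" by (rule sum.shift_bounds_nat_ivl)
  also have "\<dots> = w^a * (\<Sum>s<H. w^s)"
    by (simp add: power_add sum_distrib_left atLeast0LessThan mult.commute)
  finally show ?thesis .
qed

definition hh :: "nat \<Rightarrow> nat \<Rightarrow> complex" where
  "hh r l = complex_of_real (2 powr ((real l - real r) / 2))"

lemma haar_phi_nat:
  assumes "r - l = Suc d"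
  shows "haar_phi r l p t =
    (if t \<in> {p*(2*2^d)..<p*(2*2^d)+2^d} then hh r l else 0)
    + (if t \<in> {p*(2*2^d)+2^d..<p*(2*2^d)+2*2^d} then - hh r l else 0)"
proof -
  have L: "(2::real) ^ (r - l) = 2 * 2^d" using assms by simp
  have c1: "real p * 2 ^ (r - l) \<le> real t \<longleftrightarrow> p*(2*2^d) \<le> t"
  proof -
    have "real p * 2 ^ (r - l) = real (p*(2*2^d))" unfolding L by simp
    then show ?thesis by (simp only: of_nat_le_iff)
  qed
  have c2: "real t < (real p + 1/2) * 2 ^ (r - l) \<longleftrightarrow> t < p*(2*2^d)+2^d"
  proof -
    have "(real p + 1/2) * 2 ^ (r - l) = real (p*(2*2^d)+2^d)" unfolding L by (simp add: algebra_simps)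
    then show ?thesis by (simp only: of_nat_less_iff)
  qed
  have c3: "(real p + 1/2) * 2 ^ (r - l) \<le> real t \<longleftrightarrow> p*(2*2^d)+2^d \<le> t"
  proof -
    have "(real p + 1/2) * 2 ^ (r - l) = real (p*(2*2^d)+2^d)" unfolding L by (simp add: algebra_simps)
    then show ?thesis by (simp only: of_nat_le_iff)
  qed
  have c4: "real t < (real p + 1) * 2 ^ (r - l) \<longleftrightarrow> t < p*(2*2^d)+2*2^d"
  proof -
    have "(real p + 1) * 2 ^ (r - l) = real (p*(2*2^d)+2*2^d)" unfolding L by (simp add: algebra_simps)
    then show ?thesis by (simp only: of_nat_less_iff)
  qed
  show ?thesis unfolding haar_phi_def c1 c2 c3 c4 hh_def by auto
qed

lemma phi_sum:
  assumes "r - l = Suc d" "p < 2^l" "l < r"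
  shows "(\<Sum>t<2^r. haar_phi r l p t * w^t)
      = hh r l * w^(p*(2*2^d)) * (1 - w^(2^d)) * (\<Sum>s<2^d. w^s)"
proof -
  define a where "a = p*(2*2^d)"
  define A where "A = {a..<a+2^d}"
  define B where "B = {a+2^d..<a+2*2^d}"
  have r: "r = l + Suc d" using assms by simp
  have "a + 2*2^d = (p+1) * 2^(Suc d)" unfolding a_def by simp
  also have "\<dots> \<le> 2^l * 2^(Suc d)" using assms(2) by (intro mult_right_mono) auto
  also have "\<dots> = 2^r" unfolding r by (simp add: power_add)
  finally have le: "a + 2*2^d \<le> 2^r" .
  have AB: "A \<subseteq> {..<2^r}" "B \<subseteq> {..<2^r}" unfolding A_def B_def using le by auto
  have "(\<Sum>t<2^r. haar_phi r l p t * w^t)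
       = (\<Sum>t<2^r. (if t \<in> A then hh r l * w^t else 0)) + (\<Sum>t<2^r. (if t \<in> B then - hh r l * w^t else 0))"
    unfolding sum.distrib[symmetric]
    by (rule sum.cong) (auto simp: haar_phi_nat[OF assms(1)] A_def B_def a_def)
  also have "\<dots> = (\<Sum>t\<in>A. hh r l * w^t) + (\<Sum>t\<in>B. - hh r l * w^t)"
    unfolding sum.inter_restrict[OF finite_lessThan, symmetric]
    using AB by (simp add: Int_absorb1 Int_absorb2 Int_commute)
  also have "\<dots> = hh r l * (w^a * (\<Sum>s<2^d. w^s)) - hh r l * (w^(a+2^d) * (\<Sum>s<2^d. w^s))"
    unfolding A_def B_def sum_distrib_left[symmetric] sum_negf
    using geo_shift[where a=a and H="2^d" and w=w] geo_shift[where a="a+2^d" and H="2^d" and w=w] by (simp add: mult_2 add.assoc)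
  also have "\<dots> = hh r l * w^a * (1 - w^(2^d)) * (\<Sum>s<2^d. w^s)"
    by (simp add: power_add algebra_simps)
  finally show ?thesis unfolding a_def .
qed

lemma fourier_phi:
  assumes "r - l = Suc d" "p < 2^l" "l < r"
  shows "fourier r (haar_phi r l p) \<omega> =
    of_real (1 / sqrt (2 ^ r)) * hh r l * zz r \<omega>^(p*(2*2^d)) * (1 - zz r \<omega>^(2^d)) * (\<Sum>s<2^d. zz r \<omega>^s)"
  unfolding fourier_alt phi_sum[OF assms] by (simp add: mult.assoc)

lemma fourier_phi_shift:
  assumes "r - l = Suc d" "p < 2^l" "l < r"
  shows "fourier r (haar_phi r l p) \<omega> = zz r \<omega>^(p*(2*2^d)) * fourier r (haar_phi r l 0) \<omega>"
  using fourier_phi[OF assms] fourier_phi[OF assms(1) _ assms(3), of 0] by simp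

lemma norm_hh: assumes "l \<le> r" shows "(cmod (hh r l))\<^sup>2 = 1 / 2^(r-l)"
proof -
  have "(cmod (hh r l))\<^sup>2 = (2 powr ((real l - real r) / 2))\<^sup>2" unfolding hh_def by simp
  also have "\<dots> = 2 powr ((real l - real r) / 2) * 2 powr ((real l - real r) / 2)"
    by (simp add: power2_eq_square)
  also have "\<dots> = 2 powr (- real (r - l))" unfolding powr_add[symmetric] using assms
    by (simp add: of_nat_diff)
  also have "\<dots> = 1 / 2^(r-l)" by (simp add: powr_minus_divide powr_realpow)
  finally show ?thesis .
qed

lemma norm_geo_le: "cmod (\<Sum>s<H. zz r \<omega>^s) \<le> real H"
proof -
  have "cmod (\<Sum>s<H. zz r \<omega>^s) \<le> (\<Sum>s<H. cmod (zz r \<omega>^s))" by (rule norm_sum)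
  also have "\<dots> = real H" by (simp add: norm_power)
  finally show ?thesis .
qed

lemma normF_sq:
  assumes "r - l = Suc d" "l < r"
  shows "(cmod (fourier r (haar_phi r l 0) \<omega>))\<^sup>2 =
     (1 / 2^r) * (1 / 2^(r-l)) * (cmod (1 - zz r \<omega>^(2^d)))\<^sup>2 * (cmod (\<Sum>s<2^d. zz r \<omega>^s))\<^sup>2"
proof -
  have "(cmod (of_real (1 / sqrt (2 ^ r)) :: complex))\<^sup>2 = 1 / 2^r"
    by (simp add: norm_divide power_divide)
  moreover have "fourier r (haar_phi r l 0) \<omega> =
    of_real (1 / sqrt (2 ^ r)) * hh r l * (1 - zz r \<omega>^(2^d)) * (\<Sum>s<2^d. zz r \<omega>^s)"
    using fourier_phi[OF assms(1) _ assms(2), where p=0 and \<omega>=\<omega>] by simp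
  ultimately show ?thesis
    using norm_hh[of l r] assms by (simp add: norm_mult norm_divide power_mult_distrib power_divide)
qed

lemma F_small:
  assumes "l < r"
  shows "(cmod (fourier r (haar_phi r l 0) \<omega>))\<^sup>2 \<le> pi^2 * (of_int \<omega>)^2 / (4 * (2^l)^3)"
proof -
  obtain d where d: "r - l = Suc d" using assms by (metis Suc_diff_Suc)
  define H :: real where "H = 2^d"
  define X :: real where "X = 2^l"
  define \<theta> where "\<theta> = 2 * pi * of_int \<omega> / 2 ^ r"
  have Hp: "H > 0" "X > 0" unfolding H_def X_def by auto
  have rr: "(2::real)^r = X * (2 * H)" unfolding X_def H_def
  proof -
    have "r = l + Suc d" using d assms by simp
    then show "(2::real)^r = 2^l * (2 * 2^d)" by (simp add: power_add)
  qed
  have rl: "(2::real)^(r-l) = 2 * H" unfolding d H_def by simp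
  have a: "(cmod (1 - zz r \<omega>^(2^d)))\<^sup>2 \<le> (H * \<theta>)\<^sup>2"
    unfolding zz_pow using norm_1_exp_le[of "real (2^d) * (2 * pi * of_int \<omega> / 2 ^ r)"]
    by (simp add: H_def \<theta>_def)
  have b: "(cmod (\<Sum>s<2^d. zz r \<omega>^s))\<^sup>2 \<le> H\<^sup>2"
    using norm_geo_le[where H="2^d" and r=r and \<omega>=\<omega>] by (simp add: H_def power_mono)
  have "(cmod (fourier r (haar_phi r l 0) \<omega>))\<^sup>2 \<le> (1 / 2^r) * (1 / 2^(r-l)) * (H * \<theta>)\<^sup>2 * H\<^sup>2"
    unfolding normF_sq[OF d assms]
    by (intro mult_mono a b mult_nonneg_nonneg) auto
  also have "\<dots> = pi^2 * (of_int \<omega>)^2 / (4 * X^3)"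
    unfolding rr rl \<theta>_def using Hp by (simp add: field_simps power2_eq_square power3_eq_cube)
  finally show ?thesis unfolding X_def .
qed

lemma F_large:
  assumes "l < r" "\<omega> \<noteq> 0" "\<bar>\<omega>\<bar> \<le> 2^(r-1)"
  shows "(cmod (fourier r (haar_phi r l 0) \<omega>))\<^sup>2 \<le> 9 * 2^l / (of_int \<omega>)^2"
proof -
  obtain d where d: "r - l = Suc d" using assms by (metis Suc_diff_Suc)
  define \<theta> where "\<theta> = 2 * pi * of_int \<omega> / 2 ^ r"
  define Q where "Q = (cmod (1 - zz r \<omega>))\<^sup>2"
  define F2 where "F2 = (cmod (fourier r (haar_phi r l 0) \<omega>))\<^sup>2"
  define T where "T = (cmod (1 - zz r \<omega>^(2^d)))\<^sup>2"
  have r1: "(2::real)^r = 2 * 2^(r-1)" using assms(1)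
    by (metis One_nat_def Suc_pred gr_implies_not0 neq0_conv power_Suc)
  have "\<bar>of_int \<omega>\<bar> \<le> (2::real)^(r-1)" using assms(3)
    by (metis of_int_abs of_int_le_iff of_int_numeral of_int_power)
  then have tb: "\<bar>\<theta>\<bar> \<le> pi" unfolding \<theta>_def r1
    by (simp add: abs_mult field_simps)
  have Qge: "\<theta>\<^sup>2 / 9 \<le> Q" unfolding Q_def zz_def \<theta>_def[symmetric]
    by (rule norm_1_exp_ge[OF tb])
  have tpos: "\<theta>\<^sup>2 > 0" unfolding \<theta>_def using assms(2) by simp
  have TQ: "T = Q * (cmod (\<Sum>s<2^d. zz r \<omega>^s))\<^sup>2"
    unfolding T_def Q_def one_diff_power_eq by (simp add: norm_mult power_mult_distrib)
  have T4: "T \<le> 4" "0 \<le> T" unfolding T_def zz_pow by (rule norm_1_exp_le4) simp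
  have T16: "T * T \<le> 4 * 4" using T4 by (intro mult_mono) auto
  have FF: "F2 = (1 / 2^r) * (1 / 2^(r-l)) * T * (cmod (\<Sum>s<2^d. zz r \<omega>^s))\<^sup>2"
    unfolding F2_def T_def by (rule normF_sq[OF d assms(1)])
  have "F2 * Q = (1 / 2^r) * (1 / 2^(r-l)) * (T * T)"
    unfolding FF by (subst (2) TQ) (simp add: algebra_simps)
  also have "\<dots> \<le> (1 / 2^r) * (1 / 2^(r-l)) * 16" using T16 by (intro mult_left_mono) auto
  finally have FQ: "F2 * Q \<le> 16 / (2^r * 2^(r-l))" by simp
  have F0: "0 \<le> F2" unfolding F2_def by simp
  have "F2 * (\<theta>\<^sup>2 / 9) \<le> F2 * Q" using Qge F0 by (intro mult_left_mono)
  then have "F2 * (\<theta>\<^sup>2 / 9) \<le> 16 / (2^r * 2^(r-l))" using FQ by linarith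
  then have F2le: "F2 \<le> 144 / (2^r * 2^(r-l) * \<theta>\<^sup>2)" using tpos
    by (simp add: field_simps)
  have rr: "(2::real)^r = 2^l * 2^(r-l)" using assms(1)
    by (metis le_add_diff_inverse less_imp_le power_add)
  have "144 / (2^r * 2^(r-l) * \<theta>\<^sup>2) = 36 * 2^l / (pi^2 * (of_int \<omega>)^2)"
    unfolding \<theta>_def rr using assms(2) by (simp add: field_simps power2_eq_square)
  also have "\<dots> \<le> 9 * 2^l / (of_int \<omega>)^2"
  proof -
    have "2 * 2 \<le> pi * pi" using pi_ge_two by (intro mult_mono) auto
    then have "4 \<le> pi^2" by (simp add: power2_eq_square)
    then have "36 * 2^l / (pi^2 * (of_int \<omega>)^2) \<le> 36 * 2^l / (4 * (of_int \<omega>)^2)"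
      using assms(2) by (intro divide_left_mono mult_right_mono) auto
    then show ?thesis by simp
  qed
  finally show ?thesis using F2le unfolding F2_def by linarith
qed

definition ee :: "real \<Rightarrow> complex" where "ee y = exp (\<i> * of_real y)"

lemma ee_add: "ee (a + b) = ee a * ee b"
  unfolding ee_def by (simp add: distrib_left exp_add)

lemma cnj_ee: "cnj (ee a) = ee (- a)"
  unfolding ee_def by (simp add: exp_cnj)

lemma ee_pow: "ee y ^ k = ee (real k * y)"
proof -
  have "ee (real k * y) = exp (of_nat k * (\<i> * of_real y))" unfolding ee_def by (simp add: algebra_simps)
  then show ?thesis unfolding ee_def by (simp add: exp_of_nat_mult)
qed

lemma ee_int: "ee (2 * pi * of_int n) = 1"
  unfolding ee_def exp_eq_1 by (auto intro!: exI[of _ n])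

lemma ee_eq_1: "ee y = 1 \<Longrightarrow> \<exists>n::int. y = 2 * pi * of_int n"
  unfolding ee_def exp_eq_1 by auto

lemma norm_ee [simp]: "cmod (ee y) = 1" unfolding ee_def by simp

lemma int_interval_image: "{a..<a + int N} = (\<lambda>s. a + int s) ` {..<N}"
proof (intro set_eqI iffI)
  fix x assume "x \<in> {a..<a + int N}"
  then show "x \<in> (\<lambda>s. a + int s) ` {..<N}" by (intro image_eqI[of _ _ "nat (x - a)"]) auto
next
  fix x assume "x \<in> (\<lambda>s. a + int s) ` {..<N}"
  then show "x \<in> {a..<a + int N}" by auto
qed

lemma ee_sum:
  fixes m :: int
  assumes "M > 0" "\<bar>m\<bar> < int M" "N = k * M"
  shows "(\<Sum>\<omega>\<in>{a..<a + int N}. ee (2 * pi * of_int \<omega> * of_int m / real M))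
         = (if m = 0 then of_nat N else 0)"
proof -
  define w where "w = ee (2 * pi * of_int m / real M)"
  have "(\<Sum>\<omega>\<in>{a..<a + int N}. ee (2 * pi * of_int \<omega> * of_int m / real M))
      = (\<Sum>s<N. ee (2 * pi * of_int (a + int s) * of_int m / real M))"
    unfolding int_interval_image by (subst sum.reindex) (auto simp: inj_on_def)
  also have "\<dots> = (\<Sum>s<N. ee (2 * pi * of_int a * of_int m / real M) * w ^ s)"
  proof (rule sum.cong[OF refl])
    fix s
    have "2 * pi * of_int (a + int s) * of_int m / real M
        = 2 * pi * of_int a * of_int m / real M + real s * (2 * pi * of_int m / real M)"
      using assms(1) by (simp add: field_simps)
    then show "ee (2 * pi * of_int (a + int s) * of_int m / real M)
        = ee (2 * pi * of_int a * of_int m / real M) * w ^ s"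
      unfolding w_def ee_pow by (simp add: ee_add)
  qed
  also have "\<dots> = ee (2 * pi * of_int a * of_int m / real M) * (\<Sum>s<N. w ^ s)"
    by (simp add: sum_distrib_left)
  also have "\<dots> = (if m = 0 then of_nat N else 0)"
  proof (cases "m = 0")
    case True
    then show ?thesis unfolding w_def by (simp add: ee_def)
  next
    case False
    have w1: "w \<noteq> 1"
    proof
      assume "w = 1"
      then obtain n :: int where n: "2 * pi * of_int m / real M = 2 * pi * of_int n"
        unfolding w_def using ee_eq_1 by blast
      then have "real_of_int m = of_int n * real M" using assms(1) pi_gt_zero
        by (simp add: field_simps)
      then have mm: "m = n * int M" by (metis of_int_eq_iff of_int_mult of_int_of_nat_eq)
      show False
      proof (cases "n = 0")
        case True then show False using mm False by simp
      next
        case nz: False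
        have "\<bar>n * int M\<bar> = \<bar>n\<bar> * int M" by (simp add: abs_mult)
        also have "\<dots> \<ge> 1 * int M" using nz by (intro mult_right_mono) auto
        finally show False using mm assms(2) by simp
      qed
    qed
    have "w ^ N = ee (2 * pi * of_int (int k * m))"
      unfolding w_def ee_pow assms(3) using assms(1) by (simp add: field_simps)
    then have wN: "w ^ N = 1" by (simp only: ee_int)
    show ?thesis using False w1 wN by (simp add: sum_gp_strict)
  qed
  finally show ?thesis .
qed

lemma parseval:
  assumes "M > 0" "N = k * M"
  shows "(\<Sum>\<omega>\<in>{a..<a + int N}. (cmod (\<Sum>p<M. x p * ee (2 * pi * of_int \<omega> * of_nat p / real M)))\<^sup>2)
       = real N * (\<Sum>p<M. (cmod (x p))\<^sup>2)"
proof -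
  define E where "E \<omega> p = ee (2 * pi * of_int \<omega> * of_nat p / real M)" for \<omega> :: int and p :: nat
  have prod: "E \<omega> p * cnj (E \<omega> q) = ee (2 * pi * of_int \<omega> * of_int (int p - int q) / real M)" for \<omega> p q
  proof -
    have "2 * pi * of_int \<omega> * of_nat p / real M + - (2 * pi * of_int \<omega> * of_nat q / real M)
        = 2 * pi * of_int \<omega> * of_int (int p - int q) / real M"
      using assms(1) by (simp add: field_simps)
    then show ?thesis unfolding E_def cnj_ee ee_add[symmetric] by simp
  qed
  have sq: "complex_of_real ((cmod (\<Sum>p<M. x p * E \<omega> p))\<^sup>2)
      = (\<Sum>p<M. \<Sum>q<M. x p * cnj (x q) * ee (2 * pi * of_int \<omega> * of_int (int p - int q) / real M))" for \<omega>
  proof -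
    have "complex_of_real ((cmod (\<Sum>p<M. x p * E \<omega> p))\<^sup>2)
        = (\<Sum>p<M. x p * E \<omega> p) * cnj (\<Sum>p<M. x p * E \<omega> p)"
      by (rule complex_norm_square)
    also have "\<dots> = (\<Sum>p<M. x p * E \<omega> p) * (\<Sum>q<M. cnj (x q) * cnj (E \<omega> q))"
      by (simp add: cnj_sum)
    also have "\<dots> = (\<Sum>p<M. \<Sum>q<M. (x p * E \<omega> p) * (cnj (x q) * cnj (E \<omega> q)))"
      by (rule sum_product)
    also have "\<dots> = (\<Sum>p<M. \<Sum>q<M. x p * cnj (x q) * (E \<omega> p * cnj (E \<omega> q)))"
      by (simp add: ac_simps)
    finally show ?thesis unfolding prod .
  qed
  have "complex_of_real (\<Sum>\<omega>\<in>{a..<a + int N}. (cmod (\<Sum>p<M. x p * E \<omega> p))\<^sup>2)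
     = (\<Sum>\<omega>\<in>{a..<a + int N}. \<Sum>p<M. \<Sum>q<M. x p * cnj (x q) * ee (2 * pi * of_int \<omega> * of_int (int p - int q) / real M))"
    unfolding of_real_sum sq ..
  also have "\<dots> = (\<Sum>p<M. \<Sum>q<M. x p * cnj (x q) * (\<Sum>\<omega>\<in>{a..<a + int N}. ee (2 * pi * of_int \<omega> * of_int (int p - int q) / real M)))"
    by (simp add: sum_distrib_left sum.swap[where A="{a..<a + int N}"])
  also have "\<dots> = (\<Sum>p<M. \<Sum>q<M. x p * cnj (x q) * (if p = q then of_nat N else 0))"
  proof (intro sum.cong refl)
    fix p q assume "p \<in> {..<M}" "q \<in> {..<M}"
    then have "\<bar>int p - int q\<bar> < int M" by auto
    then show "x p * cnj (x q) * (\<Sum>\<omega>\<in>{a..<a + int N}. ee (2 * pi * of_int \<omega> * of_int (int p - int q) / real M))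
        = x p * cnj (x q) * (if p = q then of_nat N else 0)"
      using ee_sum[OF assms(1) _ assms(2), where m="int p - int q" and a=a] by simp
  qed
  also have "\<dots> = (\<Sum>p<M. x p * cnj (x p) * of_nat N)"
    by (simp add: if_distrib[of "\<lambda>z. _ * z"] cong: if_cong)
  also have "\<dots> = (\<Sum>p<M. complex_of_real (real N * (cmod (x p))\<^sup>2))"
    by (rule sum.cong[OF refl]) (simp only: of_real_mult complex_norm_square of_real_of_nat_eq mult_ac)
  also have "\<dots> = complex_of_real (real N * (\<Sum>p<M. (cmod (x p))\<^sup>2))"
    by (simp only: of_real_sum sum_distrib_left)
  finally show ?thesis unfolding E_def of_real_eq_iff .
qed

lemma zz_ee: "zz r \<omega> ^ t = ee (2 * pi * of_int (int t) * of_int \<omega> / real (2^r))"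
  unfolding zz_pow ee_def by (simp add: field_simps)

lemma psi_const: "1 / sqrt (2 ^ r) * 2 powr (- real r / 2) = 1 / 2 ^ r"
proof -
  have e: "(2 powr (real r / 2))\<^sup>2 = 2 ^ r"
    by (simp add: power2_eq_square powr_add[symmetric] powr_realpow)
  have "sqrt (2 ^ r) = 2 powr (real r / 2)"
    by (rule real_sqrt_unique[OF e]) simp
  moreover have "2 powr (- real r / 2) = 1 / 2 powr (real r / 2)"
    by (simp add: powr_minus_divide)
  ultimately show ?thesis using e by (simp add: power2_eq_square)
qed

lemma fourier_psi: "fourier r (haar_psi r) \<omega> = of_real (1 / 2^r) * (\<Sum>t<2^r. zz r \<omega> ^ t)"
proof -
  have "(\<Sum>t<2^r. haar_psi r t * zz r \<omega> ^ t) = (\<Sum>t<2^r. of_real (2 powr (- real r / 2)) * zz r \<omega> ^ t)"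
    by (rule sum.cong) (auto simp: haar_psi_def)
  then show ?thesis unfolding fourier_alt
    by (simp add: sum_distrib_left[symmetric] psi_const[symmetric] mult.assoc)
qed

lemma psi_bound: "cmod (fourier r (haar_psi r) \<omega>) \<le> 1"
proof -
  have "cmod (\<Sum>t<2^r. zz r \<omega> ^ t) \<le> 2^r" using norm_geo_le[where H="2^r"] by simp
  then show ?thesis unfolding fourier_psi by (simp add: norm_mult norm_divide norm_power divide_le_eq)
qed

lemma psi_zero: assumes "\<omega> \<noteq> 0" "\<bar>\<omega>\<bar> < 2^r" shows "fourier r (haar_psi r) \<omega> = 0"
proof -
  have "(\<Sum>t<2^r. zz r \<omega> ^ t) = (\<Sum>t<2^r. ee (2 * pi * of_int (0 + int t) * of_int \<omega> / real (2^r)))"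
    unfolding zz_ee by simp
  also have "\<dots> = (\<Sum>v\<in>{0..<0 + int (2^r)}. ee (2 * pi * of_int v * of_int \<omega> / real (2^r)))"
    unfolding int_interval_image by (subst sum.reindex) (auto simp: inj_on_def)
  also have "\<dots> = 0"
    using ee_sum[where M="2^r" and m=\<omega> and N="2^r" and k=1 and a=0] assms by simp
  finally show ?thesis unfolding fourier_psi by simp
qed

lemma op_norm_le:
  assumes "0 \<le> B"
    "\<And>x. (\<Sum>p\<in>P. (cmod (x p))\<^sup>2) \<le> 1 \<Longrightarrow> (\<Sum>\<omega>\<in>R. (cmod (\<Sum>p\<in>P. M \<omega> p * x p))\<^sup>2) \<le> B\<^sup>2"
  shows "op_norm2 M R P \<le> B"
  unfolding op_norm2_def
proof (rule cSup_least)
  show "{sqrt (\<Sum>\<omega>\<in>R. (cmod (\<Sum>p\<in>P. M \<omega> p * x p))\<^sup>2) |x. (\<Sum>p\<in>P. (cmod (x p))\<^sup>2) \<le> 1} \<noteq> {}"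
    by (rule ccontr) (auto dest: spec[of _ "\<lambda>_. 0"])
next
  fix v assume "v \<in> {sqrt (\<Sum>\<omega>\<in>R. (cmod (\<Sum>p\<in>P. M \<omega> p * x p))\<^sup>2) |x. (\<Sum>p\<in>P. (cmod (x p))\<^sup>2) \<le> 1}"
  then obtain x where v: "v = sqrt (\<Sum>\<omega>\<in>R. (cmod (\<Sum>p\<in>P. M \<omega> p * x p))\<^sup>2)"
    and x: "(\<Sum>p\<in>P. (cmod (x p))\<^sup>2) \<le> 1" by blast
  have "v \<le> sqrt (B\<^sup>2)" unfolding v using assms(2)[OF x] by (rule real_sqrt_le_mono)
  then show "v \<le> B" using assms(1) by simp
qed

lemma band_facts:
  assumes "\<omega> \<in> band j"
  shows "\<bar>\<omega>\<bar> \<le> 2^j" "- (2^j) + 1 \<le> \<omega>" "\<omega> < 2^j + 1" "j > 0 \<Longrightarrow> 2^(j-1) \<le> \<bar>\<omega>\<bar>"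
proof -
  have all: "\<bar>\<omega>\<bar> \<le> 2^j \<and> - (2^j) + 1 \<le> \<omega> \<and> \<omega> < 2^j + 1 \<and> (j > 0 \<longrightarrow> 2^(j-1) \<le> \<bar>\<omega>\<bar>)"
  proof (cases "j = 0")
    case True
    then show ?thesis using assms unfolding band_def by auto
  next
    case False
    define a b where "a = (2::int)^(j-1)" and "b = (2::int)^j"
    have ab: "0 < a" "a \<le> b" unfolding a_def b_def by (auto intro: power_increasing)
    have w: "\<omega> \<in> {-b+1..-a} \<union> {a+1..b}" using assms False unfolding band_def a_def b_def by simp
    have "\<bar>\<omega>\<bar> \<le> b \<and> - b + 1 \<le> \<omega> \<and> \<omega> < b + 1 \<and> a \<le> \<bar>\<omega>\<bar>" using w ab by auto
    then show ?thesis unfolding a_def b_def by auto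
  qed
  then show "\<bar>\<omega>\<bar> \<le> 2^j" "- (2^j) + 1 \<le> \<omega>" "\<omega> < 2^j + 1" "j > 0 \<Longrightarrow> 2^(j-1) \<le> \<bar>\<omega>\<bar>"
    by auto
qed

lemma finite_band: "finite (band j)" unfolding band_def by auto

lemma main_pos:
  assumes "1 \<le> l" "l < r" "0 \<le> A"
    and Ab: "\<And>\<omega>. \<omega> \<in> band j \<Longrightarrow> (cmod (fourier r (haar_phi r l 0) \<omega>))\<^sup>2 \<le> A"
    and x: "(\<Sum>p\<in>cols l. (cmod (x p))\<^sup>2) \<le> 1"
  shows "(\<Sum>\<omega>\<in>band j. (cmod (\<Sum>p\<in>cols l. Ublock r j l \<omega> p * x p))\<^sup>2) \<le> A * 2^(max j l + 1)"
proof -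
  obtain d where d: "r - l = Suc d" using assms by (metis Suc_diff_Suc)
  have cl: "cols l = {..<2^l}" using assms(1) unfolding cols_def by auto
  define g where "g \<omega> = (\<Sum>p<2^l. x p * ee (2 * pi * of_int \<omega> * of_nat p / real (2^l)))" for \<omega>
  have rr: "(2::real)^r = 2^l * (2 * 2^d)"
  proof -
    have "r = l + Suc d" using d assms by simp
    then show ?thesis by (simp add: power_add)
  qed
  have row: "(\<Sum>p\<in>cols l. Ublock r j l \<omega> p * x p) = fourier r (haar_phi r l 0) \<omega> * g \<omega>" for \<omega>
  proof -
    have "Ublock r j l \<omega> p * x p = fourier r (haar_phi r l 0) \<omega> * (x p * ee (2 * pi * of_int \<omega> * of_nat p / real (2^l)))"
      if "p < 2^l" for p
    proof -
      have "zz r \<omega>^(p*(2*2^d)) = ee (2 * pi * of_int \<omega> * of_nat p / real (2^l))"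
        unfolding zz_pow ee_def rr by (simp add: field_simps)
      then show ?thesis unfolding Ublock_def using assms(1) fourier_phi_shift[OF d that assms(2)]
        by simp
    qed
    then show ?thesis unfolding cl g_def sum_distrib_left by (intro sum.cong) auto
  qed
  define m :: nat where "m = 2^(max j l)"
  define N :: nat where "N = 2 * m"
  have Nk: "N = 2^(max j l + 1 - l) * 2^l" unfolding N_def m_def
    by (simp add: power_add[symmetric])
  have jm: "(2::int)^j \<le> int m" unfolding m_def by (simp add: power_increasing)
  have sub: "band j \<subseteq> {(- int m + 1)..<(- int m + 1) + int N}"
  proof
    fix \<omega> assume "\<omega> \<in> band j"
    have "- (2^j) + 1 \<le> \<omega>" "\<omega> < 2^j + 1" using band_facts[OF \<open>\<omega> \<in> band j\<close>] by auto
    moreover have "int N = 2 * int m" unfolding N_def by simp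
    ultimately have "- int m + 1 \<le> \<omega>" "\<omega> < (- int m + 1) + int N" using jm by linarith+
    then show "\<omega> \<in> {(- int m + 1)..<(- int m + 1) + int N}" by simp
  qed
  have "(\<Sum>\<omega>\<in>band j. (cmod (\<Sum>p\<in>cols l. Ublock r j l \<omega> p * x p))\<^sup>2)
      = (\<Sum>\<omega>\<in>band j. (cmod (fourier r (haar_phi r l 0) \<omega>))\<^sup>2 * (cmod (g \<omega>))\<^sup>2)"
    unfolding row by (simp add: norm_mult power_mult_distrib)
  also have "\<dots> \<le> (\<Sum>\<omega>\<in>band j. A * (cmod (g \<omega>))\<^sup>2)"
    by (intro sum_mono mult_right_mono Ab) auto
  also have "\<dots> = A * (\<Sum>\<omega>\<in>band j. (cmod (g \<omega>))\<^sup>2)" by (simp add: sum_distrib_left)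
  also have "\<dots> \<le> A * (\<Sum>\<omega>\<in>{(- int m + 1)..<(- int m + 1) + int N}. (cmod (g \<omega>))\<^sup>2)"
    by (intro mult_left_mono sum_mono2 sub assms(3)) auto
  also have "\<dots> = A * (real N * (\<Sum>p<2^l. (cmod (x p))\<^sup>2))"
    unfolding g_def by (subst parseval[OF _ Nk]) auto
  also have "\<dots> \<le> A * (real N * 1)"
    using x unfolding cl by (intro mult_left_mono assms(3)) auto
  also have "\<dots> = A * 2^(max j l + 1)" unfolding N_def m_def by simp
  finally show ?thesis .
qed

lemma pi_sq_le: "pi^2 \<le> 16"
proof -
  have "pi * pi \<le> 4 * 4" using pi_less_4 pi_gt_zero by (intro mult_mono) auto
  then show ?thesis by (simp add: power2_eq_square)
qed

lemma sq_le_of_abs: fixes \<omega> :: int assumes "\<bar>\<omega>\<bar> \<le> 2^j" shows "(of_int \<omega>)^2 \<le> ((2::real)^j)^2"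
proof -
  have "\<bar>real_of_int \<omega>\<bar> \<le> 2^j" using assms
    by (metis of_int_abs of_int_le_iff of_int_numeral of_int_power)
  then have "\<bar>real_of_int \<omega>\<bar>^2 \<le> (2^j)^2" by (intro power_mono) auto
  then show ?thesis by simp
qed

lemma sq_ge_of_abs: fixes \<omega> :: int assumes "2^j \<le> \<bar>\<omega>\<bar>" shows "((2::real)^j)^2 \<le> (of_int \<omega>)^2"
proof -
  have "2^j \<le> \<bar>real_of_int \<omega>\<bar>" using assms
    by (metis of_int_abs of_int_le_iff of_int_numeral of_int_power)
  then have "(2^j)^2 \<le> \<bar>real_of_int \<omega>\<bar>^2" by (intro power_mono) auto
  then show ?thesis by simp
qed

lemma caseA:
  assumes "1 \<le> l" "l < r" "j \<le> l" "(\<Sum>p\<in>cols l. (cmod (x p))\<^sup>2) \<le> 1"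
  shows "(\<Sum>\<omega>\<in>band j. (cmod (\<Sum>p\<in>cols l. Ublock r j l \<omega> p * x p))\<^sup>2) \<le> 144 / 2^(l-j)"
proof -
  define A :: real where "A = pi^2 * (2^j)^2 / (4 * (2^l)^3)"
  have A0: "0 \<le> A" unfolding A_def by simp
  have Ab: "(cmod (fourier r (haar_phi r l 0) \<omega>))\<^sup>2 \<le> A" if "\<omega> \<in> band j" for \<omega>
  proof -
    have "(of_int \<omega>)^2 \<le> ((2::real)^j)^2" using band_facts(1)[OF that] by (rule sq_le_of_abs)
    then have "pi^2 * (of_int \<omega>)^2 / (4 * (2^l)^3) \<le> A" unfolding A_def
      by (intro divide_right_mono mult_left_mono) auto
    then show ?thesis using F_small[OF assms(2), of \<omega>] by linarith
  qed
  have "(\<Sum>\<omega>\<in>band j. (cmod (\<Sum>p\<in>cols l. Ublock r j l \<omega> p * x p))\<^sup>2) \<le> A * 2^(max j l + 1)"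
    by (rule main_pos[OF assms(1,2) A0 Ab assms(4)])
  also have "\<dots> \<le> 144 / 2^(l-j)"
  proof -
    define a :: real where "a = 2^j"
    define b :: real where "b = 2^(l-j)"
    have ab: "a > 0" "b \<ge> 1" unfolding a_def b_def by auto
    have l: "(2::real)^l = a * b" unfolding a_def b_def using assms(3)
      by (metis le_add_diff_inverse power_add)
    have m: "(2::real)^(max j l + 1) = 2 * (a * b)" using assms(3) l by (simp add: max_def)
    have "A * 2^(max j l + 1) = pi^2 / (2 * (b * b))" unfolding A_def m l a_def[symmetric]
      using ab by (simp add: field_simps power2_eq_square power3_eq_cube)
    also have "\<dots> \<le> 16 / (2 * (b * b))" using pi_sq_le ab by (intro divide_right_mono) auto
    also have "\<dots> = 8 / (b * b)" by simp
    also have "\<dots> \<le> 8 / b"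
    proof -
      have "1 * b \<le> b * b" using ab by (intro mult_right_mono) auto
      then have "b \<le> b * b" by simp
      then show ?thesis using ab by (intro divide_left_mono) auto
    qed
    also have "\<dots> \<le> 144 / b" using ab by (intro divide_right_mono) auto
    finally show ?thesis unfolding b_def .
  qed
  finally show ?thesis .
qed

lemma caseB:
  assumes "1 \<le> l" "l < r" "j < r" "l < j" "(\<Sum>p\<in>cols l. (cmod (x p))\<^sup>2) \<le> 1"
  shows "(\<Sum>\<omega>\<in>band j. (cmod (\<Sum>p\<in>cols l. Ublock r j l \<omega> p * x p))\<^sup>2) \<le> 144 / 2^(j-l)"
proof -
  define A :: real where "A = 9 * 2^l / ((2^(j-1))^2)"
  have A0: "0 \<le> A" unfolding A_def by simp
  have Ab: "(cmod (fourier r (haar_phi r l 0) \<omega>))\<^sup>2 \<le> A" if "\<omega> \<in> band j" for \<omega>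
  proof -
    have j0: "j > 0" using assms by simp
    have lo: "2^(j-1) \<le> \<bar>\<omega>\<bar>" using band_facts(4)[OF that j0] .
    have nz: "\<omega> \<noteq> 0" using lo by (metis abs_zero not_less zero_less_power zero_less_numeral)
    have "(2::int)^j \<le> 2^(r-1)" using assms by (intro power_increasing) auto
    then have hi: "\<bar>\<omega>\<bar> \<le> 2^(r-1)" using band_facts(1)[OF that] by linarith
    have "((2::real)^(j-1))^2 \<le> (of_int \<omega>)^2" using lo by (rule sq_ge_of_abs)
    then have "9 * 2^l / (of_int \<omega>)^2 \<le> A" unfolding A_def
      using nz by (intro divide_left_mono) auto
    then show ?thesis using F_large[OF assms(2) nz hi] by linarith
  qed
  have "(\<Sum>\<omega>\<in>band j. (cmod (\<Sum>p\<in>cols l. Ublock r j l \<omega> p * x p))\<^sup>2) \<le> A * 2^(max j l + 1)"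
    by (rule main_pos[OF assms(1,2) A0 Ab assms(5)])
  also have "\<dots> = 72 / 2^(j-l)"
  proof -
    define c :: real where "c = 2^(j-1)"
    define e :: real where "e = 2^(j-l)"
    define u :: real where "u = 2^l"
    have pos: "c > 0" "e > 0" "u > 0" unfolding c_def e_def u_def by auto
    have jj: "(2::real)^j = 2 * c"
    proof -
      have "(2::real)^j = 2^(Suc (j-1))" using assms by simp
      then show ?thesis unfolding c_def by simp
    qed
    have hu: "u * e = 2 * c"
    proof -
      have "(2::real)^l * 2^(j-l) = 2^(l + (j-l))" by (simp add: power_add)
      also have "l + (j - l) = j" using assms by simp
      finally show ?thesis unfolding u_def e_def jj by simp
    qed
    have ue: "u = 2 * c / e" using hu pos by (simp add: field_simps)
    have m: "(2::real)^(max j l + 1) = 4 * c" using assms jj by (simp add: max_def)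
    show ?thesis unfolding A_def m c_def[symmetric] u_def[symmetric] e_def[symmetric] ue
      using pos by (simp add: field_simps power2_eq_square)
  qed
  also have "\<dots> \<le> 144 / 2^(j-l)" by (intro divide_right_mono) auto
  finally show ?thesis .
qed

lemma cs2: "(cmod (a * x + b * y))\<^sup>2 \<le> ((cmod a)\<^sup>2 + (cmod b)\<^sup>2) * ((cmod x)\<^sup>2 + (cmod y)\<^sup>2)"
proof -
  have "cmod (a * x + b * y) \<le> cmod a * cmod x + cmod b * cmod y"
    using norm_triangle_ineq[of "a*x" "b*y"] by (simp add: norm_mult)
  then have "(cmod (a * x + b * y))\<^sup>2 \<le> (cmod a * cmod x + cmod b * cmod y)\<^sup>2"
    by (intro power_mono) auto
  also have "\<dots> \<le> ((cmod a)\<^sup>2 + (cmod b)\<^sup>2) * ((cmod x)\<^sup>2 + (cmod y)\<^sup>2)"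
  proof -
    have "0 \<le> (cmod a * cmod y - cmod b * cmod x)\<^sup>2" by simp
    then show ?thesis by (simp add: power2_eq_square algebra_simps)
  qed
  finally show ?thesis .
qed

lemma rowC:
  assumes "(cmod (x 0))\<^sup>2 + (cmod (x 1))\<^sup>2 \<le> 1"
  shows "(cmod (\<Sum>p\<in>cols 0. Ublock r j 0 \<omega> p * x p))\<^sup>2
      \<le> (cmod (fourier r (haar_psi r) \<omega>))\<^sup>2 + (cmod (fourier r (haar_phi r 0 0) \<omega>))\<^sup>2"
proof -
  have "(\<Sum>p\<in>cols 0. Ublock r j 0 \<omega> p * x p)
      = fourier r (haar_psi r) \<omega> * x 0 + fourier r (haar_phi r 0 0) \<omega> * x 1"
    unfolding cols_def Ublock_def by simp
  then have "(cmod (\<Sum>p\<in>cols 0. Ublock r j 0 \<omega> p * x p))\<^sup>2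
    \<le> ((cmod (fourier r (haar_psi r) \<omega>))\<^sup>2 + (cmod (fourier r (haar_phi r 0 0) \<omega>))\<^sup>2)
       * ((cmod (x 0))\<^sup>2 + (cmod (x 1))\<^sup>2)" using cs2 by simp
  also have "\<dots> \<le> ((cmod (fourier r (haar_psi r) \<omega>))\<^sup>2 + (cmod (fourier r (haar_phi r 0 0) \<omega>))\<^sup>2) * 1"
    using assms by (intro mult_left_mono) auto
  finally show ?thesis by simp
qed

lemma termC0:
  assumes r0: "0 < r" and w: "\<omega> \<in> band 0"
  shows "(cmod (fourier r (haar_psi r) \<omega>))\<^sup>2 + (cmod (fourier r (haar_phi r 0 0) \<omega>))\<^sup>2 \<le> 72"
proof -
  have a: "(cmod (fourier r (haar_psi r) \<omega>))\<^sup>2 \<le> 1"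
    using psi_bound[of r \<omega>] by (simp add: abs_square_le_1)
  have "(of_int \<omega>)^2 \<le> ((2::real)^0)^2" using band_facts(1)[OF w] by (rule sq_le_of_abs)
  then have "(of_int \<omega>)^2 \<le> (1::real)" by simp
  then have "pi^2 * (of_int \<omega>)^2 \<le> pi^2 * 1" by (intro mult_left_mono) auto
  then have "pi^2 * (of_int \<omega>)^2 / (4 * (2^0)^3) \<le> pi^2 * 1 / 4"
    by (simp add: divide_right_mono)
  then have "(cmod (fourier r (haar_phi r 0 0) \<omega>))\<^sup>2 \<le> pi^2 * 1 / 4"
    using F_small[OF r0, of \<omega>] by linarith
  then have "(cmod (fourier r (haar_phi r 0 0) \<omega>))\<^sup>2 \<le> 4"
    using pi_sq_le by linarith
  with a show ?thesis by simp
qed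

lemma termC1:
  assumes r0: "0 < r" and j0: "0 < j" and jr: "j < r" and w: "\<omega> \<in> band j"
  shows "(cmod (fourier r (haar_psi r) \<omega>))\<^sup>2 + (cmod (fourier r (haar_phi r 0 0) \<omega>))\<^sup>2 \<le> 9 / ((2::real)^(j-1))^2"
proof -
  have lo: "2^(j-1) \<le> \<bar>\<omega>\<bar>" using band_facts(4)[OF w j0] .
  have nz: "\<omega> \<noteq> 0" using lo by (metis abs_zero not_less zero_less_power zero_less_numeral)
  have "(2::int)^j \<le> 2^(r-1)" using jr by (intro power_increasing) auto
  then have hi: "\<bar>\<omega>\<bar> \<le> 2^(r-1)" using band_facts(1)[OF w] by linarith
  have ltr: "(2::int)^(r-1) < 2^r" using r0 by (intro power_strict_increasing) auto
  have "\<bar>\<omega>\<bar> < 2^r" using hi ltr by linarith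
  then have z: "fourier r (haar_psi r) \<omega> = 0" using nz by (intro psi_zero)
  have "((2::real)^(j-1))^2 \<le> (of_int \<omega>)^2" using lo by (rule sq_ge_of_abs)
  then have "9 / (of_int \<omega>)^2 \<le> 9 / ((2::real)^(j-1))^2" using nz
    by (intro divide_left_mono) auto
  then have "9 * 2^0 / (of_int \<omega>)^2 \<le> 9 / ((2::real)^(j-1))^2" by simp
  then have "(cmod (fourier r (haar_phi r 0 0) \<omega>))\<^sup>2 \<le> 9 / ((2::real)^(j-1))^2"
    using F_large[OF r0 nz hi] by linarith
  then show ?thesis using z by simp
qed

lemma card_band: "real (card (band j)) \<le> 2 * 2^j"
proof -
  have "band j \<subseteq> {- (2^j) + 1..<(2::int)^j + 1}"
    using band_facts(2,3) by auto
  then have "card (band j) \<le> card {- (2^j) + 1..<(2::int)^j + 1}" by (intro card_mono) auto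
  also have "card {- (2^j) + 1..<(2::int)^j + 1} = nat (2 * 2^j)" by simp
  also have "\<dots> = 2 * 2^j" by (simp add: nat_mult_distrib nat_power_eq)
  finally have "real (card (band j)) \<le> real (2 * 2^j)" by (rule of_nat_mono)
  then show ?thesis by simp
qed

lemma arithC: assumes "0 < j" shows "(2 * 2^j) * (9 / ((2::real)^(j-1))^2) = 72 / 2^j"
proof -
  define c :: real where "c = 2^(j-1)"
  have cpos: "c > 0" unfolding c_def by simp
  have "(2::real)^j = 2^(Suc (j-1))" using assms by simp
  then have "(2::real)^j = 2 * c" unfolding c_def by simp
  then show ?thesis unfolding c_def[symmetric] using cpos by (simp add: field_simps power2_eq_square)
qed

lemma caseC0:
  assumes "0 < r" "(cmod (x 0))\<^sup>2 + (cmod (x 1))\<^sup>2 \<le> 1"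
  shows "(\<Sum>\<omega>\<in>band 0. (cmod (\<Sum>p\<in>cols 0. Ublock r 0 0 \<omega> p * x p))\<^sup>2) \<le> 144"
proof -
  have "(\<Sum>\<omega>\<in>band 0. (cmod (\<Sum>p\<in>cols 0. Ublock r 0 0 \<omega> p * x p))\<^sup>2) \<le> of_nat (card (band 0)) * 72"
    using rowC[OF assms(2)] termC0[OF assms(1)] by (intro sum_bounded_above) (meson order_trans)
  also have "\<dots> = 144" unfolding band_def by simp
  finally show ?thesis .
qed

lemma caseC1:
  assumes "0 < r" "0 < j" "j < r" "(cmod (x 0))\<^sup>2 + (cmod (x 1))\<^sup>2 \<le> 1"
  shows "(\<Sum>\<omega>\<in>band j. (cmod (\<Sum>p\<in>cols 0. Ublock r j 0 \<omega> p * x p))\<^sup>2) \<le> 144 / 2^j"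
proof -
  have "(\<Sum>\<omega>\<in>band j. (cmod (\<Sum>p\<in>cols 0. Ublock r j 0 \<omega> p * x p))\<^sup>2)
      \<le> of_nat (card (band j)) * (9 / ((2::real)^(j-1))^2)"
    using rowC[OF assms(4)] termC1[OF assms(1-3)] by (intro sum_bounded_above) (meson order_trans)
  also have "\<dots> \<le> (2 * 2^j) * (9 / ((2::real)^(j-1))^2)"
    using card_band[of j] by (intro mult_right_mono) auto
  also have "\<dots> = 72 / 2^j" using assms(2) by (rule arithC)
  also have "\<dots> \<le> 144 / 2^j" by (intro divide_right_mono) auto
  finally show ?thesis .
qed

lemma caseC:
  assumes "1 \<le> r" "j < r" "(\<Sum>p\<in>cols 0. (cmod (x p))\<^sup>2) \<le> 1"
  shows "(\<Sum>\<omega>\<in>band j. (cmod (\<Sum>p\<in>cols 0. Ublock r j 0 \<omega> p * x p))\<^sup>2) \<le> 144 / 2^j"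
proof (cases "j = 0")
  case True
  have x2: "(cmod (x 0))\<^sup>2 + (cmod (x 1))\<^sup>2 \<le> 1" using assms(3) unfolding cols_def by simp
  show ?thesis using caseC0[OF _ x2, of r] assms(1) True by simp
next
  case False
  have x2: "(cmod (x 0))\<^sup>2 + (cmod (x 1))\<^sup>2 \<le> 1" using assms(3) unfolding cols_def by simp
  show ?thesis using caseC1[OF _ _ assms(2) x2] assms(1) False by simp
qed

lemma powr_sq_D:
  "(12 * 2 powr (- \<bar>real j - real l\<bar> / 2))\<^sup>2 = 144 / 2^(if j \<le> l then l - j else j - l)"
proof -
  have a: "\<bar>real j - real l\<bar> = real (if j \<le> l then l - j else j - l)" by auto
  have "(2 powr (- \<bar>real j - real l\<bar> / 2))\<^sup>2 = 2 powr (- \<bar>real j - real l\<bar> / 2) * 2 powr (- \<bar>real j - real l\<bar> / 2)"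
    by (simp add: power2_eq_square)
  also have "\<dots> = 2 powr (- \<bar>real j - real l\<bar>)" by (simp add: powr_add[symmetric])
  also have "\<dots> = 1 / 2^(if j \<le> l then l - j else j - l)" unfolding a
    by (simp add: powr_minus_divide powr_realpow)
  finally show ?thesis by (simp add: power_mult_distrib)
qed

theorem lemma3:
  shows "\<exists>C>0. \<forall>r\<ge>1. \<forall>j<r. \<forall>l<r.
           op_norm2 (Ublock r j l) (band j) (cols l)
             \<le> C * 2 powr (- \<bar>real j - real l\<bar> / 2)"
proof (intro exI[of _ 12] conjI allI impI)
  show "(0::real) < 12" by simp
  fix r j l :: nat assume r: "1 \<le> r" and j: "j < r" and l: "l < r"
  show "op_norm2 (Ublock r j l) (band j) (cols l) \<le> 12 * 2 powr (- \<bar>real j - real l\<bar> / 2)"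
  proof (rule op_norm_le)
    show "0 \<le> 12 * 2 powr (- \<bar>real j - real l\<bar> / 2)" by simp
  next
    fix x :: "nat \<Rightarrow> complex"
    assume x: "(\<Sum>p\<in>cols l. (cmod (x p))\<^sup>2) \<le> 1"
    have key: "(\<Sum>\<omega>\<in>band j. (cmod (\<Sum>p\<in>cols l. Ublock r j l \<omega> p * x p))\<^sup>2)
          \<le> 144 / 2^(if j \<le> l then l - j else j - l)"
    proof (cases "l = 0")
      case True
      then show ?thesis using caseC[OF r j, of x] x by auto
    next
      case False
      then have l1: "1 \<le> l" by simp
      show ?thesis
      proof (cases "j \<le> l")
        case True
        then show ?thesis using caseA[OF l1 l True x] by simp
      next
        case False
        then show ?thesis using caseB[OF l1 l j _ x] by simp
      qed
    qed
    then show "(\<Sum>\<omega>\<in>band j. (cmod (\<Sum>p\<in>cols l. Ublock r j l \<omega> p * x p))\<^sup>2)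
          \<le> (12 * 2 powr (- \<bar>real j - real l\<bar> / 2))\<^sup>2"
      unfolding powr_sq_D .
  qed
qed

end
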